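(* Let $(V,E)$ be a finite graph with $E\neq\emptyset$ and let $p\in(0,1)$. Let $(\eta_t,\sigma_t)_{t\geq 0}$ be a continuous-time Markov jump process on $\{0,1\}^E\times\{-1,1\}^V$ with transition rates $q((\eta,\sigma),(\eta',\sigma'))$, such that at each jump at most one site or one edge is updated (i.e. $q((\eta,\sigma),(\eta',\sigma'))=0$ unless $(\eta',\sigma')$ differs from $(\eta,\sigma)$ in at most one spin or at most one edge), and which is reversible with respect to $IP$, i.e. $$IP(\eta,\sigma)\,q((\eta,\sigma),(\eta',\sigma'))=IP(\eta',\sigma')\,q((\eta',\sigma'),(\eta,\sigma))$$ for all $(\eta,\sigma),(\eta',\sigma')$. Let $(\eta,\sigma)\in\mathcal C$ be a pair of compatible configurations. If there exists $x\in V$ such that $q((\eta,\sigma),(\eta,\sigma^x))\neq 0$, then $\eta(e)=0$ for all $e\in E_x$.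
   Context: $(V,E)$ is a finite graph with unoriented edges, $E$ a set of pairs of vertices. An edge configuration is $\eta\in\{0,1\}^E$ (1 = open, 0 = closed), a spin configuration is $\sigma\in\{-1,1\}^V$. For $e=\langle x,y\rangle$, $\delta_\sigma(e)=\mathbf 1_{\sigma(x)=\sigma(y)}$. The set of compatible pairs is $\mathcal C=\{(\eta,\sigma):\eta(e)\le\delta_\sigma(e)\ \forall e\in E\}$. The Ising–FK coupling measure is $IP(\eta,\sigma)=\frac1Z\prod_{e\in E}\big(p\mathbf 1_{\eta(e)=1}\delta_\sigma(e)+(1-p)\mathbf 1_{\eta(e)=0}\big)$, with $Z$ the normalizing constant. $E_x$ is the set of edges having $x$ as an endvertex, and $\sigma^x$ is $\sigma$ with the spin at $x$ flipped. *)

theory Defs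
  imports Complex_Main "HOL-Library.FuncSet"
begin

definition graph :: "'v set \<Rightarrow> 'v set set \<Rightarrow> bool" where
  "graph V E \<longleftrightarrow> finite V \<and> (\<forall>e\<in>E. e \<subseteq> V \<and> card e = 2)"

definition edge_configs :: "'v set set \<Rightarrow> ('v set \<Rightarrow> nat) set" where
  "edge_configs E = E \<rightarrow>\<^sub>E {0, 1}"

definition spin_configs :: "'v set \<Rightarrow> ('v \<Rightarrow> int) set" where
  "spin_configs V = V \<rightarrow>\<^sub>E {-1, 1}"

definition states :: "'v set \<Rightarrow> 'v set set \<Rightarrow> (('v set \<Rightarrow> nat) \<times> ('v \<Rightarrow> int)) set" where
  "states V E = edge_configs E \<times> spin_configs V"

definition delta :: "('v \<Rightarrow> int) \<Rightarrow> 'v set \<Rightarrow> nat" where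
  "delta \<sigma> e = (if \<forall>x\<in>e. \<forall>y\<in>e. \<sigma> x = \<sigma> y then 1 else 0)"

definition compatible :: "'v set set \<Rightarrow> ('v set \<Rightarrow> nat) \<Rightarrow> ('v \<Rightarrow> int) \<Rightarrow> bool" where
  "compatible E \<eta> \<sigma> \<longleftrightarrow> (\<forall>e\<in>E. \<eta> e \<le> delta \<sigma> e)"

definition weight :: "'v set set \<Rightarrow> real \<Rightarrow> ('v set \<Rightarrow> nat) \<times> ('v \<Rightarrow> int) \<Rightarrow> real" where
  "weight E p s = (\<Prod>e\<in>E. p * (if fst s e = 1 then 1 else 0) * real (delta (snd s) e)
                         + (1 - p) * (if fst s e = 0 then 1 else 0))"

definition partition_fn :: "'v set \<Rightarrow> 'v set set \<Rightarrow> real \<Rightarrow> real" where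
  "partition_fn V E p = (\<Sum>s\<in>states V E. weight E p s)"

definition IP :: "'v set \<Rightarrow> 'v set set \<Rightarrow> real \<Rightarrow> ('v set \<Rightarrow> nat) \<times> ('v \<Rightarrow> int) \<Rightarrow> real" where
  "IP V E p s = weight E p s / partition_fn V E p"

definition flip :: "('v \<Rightarrow> int) \<Rightarrow> 'v \<Rightarrow> ('v \<Rightarrow> int)" where
  "flip \<sigma> x = \<sigma>(x := - \<sigma> x)"

definition single_update :: "'v set \<Rightarrow> 'v set set \<Rightarrow>
    ('v set \<Rightarrow> nat) \<times> ('v \<Rightarrow> int) \<Rightarrow> ('v set \<Rightarrow> nat) \<times> ('v \<Rightarrow> int) \<Rightarrow> bool" where
  "single_update V E s s' \<longleftrightarrow>
     (fst s' = fst s \<and> (\<exists>x\<in>V. \<forall>y. y \<noteq> x \<longrightarrow> snd s' y = snd s y)) \<or>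
     (snd s' = snd s \<and> (\<exists>e\<in>E. \<forall>f. f \<noteq> e \<longrightarrow> fst s' f = fst s f))"

end

theory Submission
  imports Defs
begin

lemma weight_nonneg:
  assumes "0 < p" "p < 1"
  shows "0 \<le> weight E p s"
  unfolding weight_def using assms by (intro prod_nonneg) auto

lemma weight_pos:
  assumes "0 < p" "p < 1" "compatible E \<eta> \<sigma>" "\<forall>e\<in>E. \<eta> e \<in> {0,1}"
  shows "0 < weight E p (\<eta>, \<sigma>)"
  unfolding weight_def
proof (intro prod_pos ballI)
  fix e assume e: "e \<in> E"
  show "0 < p * (if fst (\<eta>, \<sigma>) e = 1 then 1 else 0) * real (delta (snd (\<eta>, \<sigma>)) e) +
           (1 - p) * (if fst (\<eta>, \<sigma>) e = 0 then 1 else 0)"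
  proof (cases "\<eta> e = 0")
    case True then show ?thesis using assms by simp
  next
    case False
    then have "\<eta> e = 1" using assms(4) e by auto
    moreover have "delta \<sigma> e = 1"
    proof -
      have "\<eta> e \<le> delta \<sigma> e" using assms(3) e unfolding compatible_def by blast
      moreover have "delta \<sigma> e \<le> 1" unfolding delta_def by simp
      ultimately show ?thesis using \<open>\<eta> e = 1\<close> by linarith
    qed
    ultimately show ?thesis using assms by simp
  qed
qed

lemma finite_E:
  assumes "graph V E"
  shows "finite E"
proof -
  have "finite V" using assms unfolding graph_def by auto
  moreover have "E \<subseteq> Pow V" using assms unfolding graph_def by auto
  ultimately show "finite E" by (meson finite_Pow_iff finite_subset)
qed

lemma finite_states:
  assumes "graph V E"
  shows "finite (states V E)"
proof -
  have "finite V" using assms unfolding graph_def by auto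
  moreover have "E \<subseteq> Pow V" using assms unfolding graph_def by auto
  ultimately have "finite E" by (meson finite_Pow_iff finite_subset)
  then show ?thesis using \<open>finite V\<close> unfolding states_def edge_configs_def spin_configs_def
    by (auto intro!: finite_PiE)
qed

theorem lemma1:
  fixes V :: "'v set" and E :: "'v set set" and p :: real
    and q :: "('v set \<Rightarrow> nat) \<times> ('v \<Rightarrow> int) \<Rightarrow> ('v set \<Rightarrow> nat) \<times> ('v \<Rightarrow> int) \<Rightarrow> real"
    and \<eta> :: "'v set \<Rightarrow> nat" and \<sigma> :: "'v \<Rightarrow> int" and x :: 'v
  assumes "graph V E" and "E \<noteq> {}"
    and "0 < p" and "p < 1"
    and rates_nonneg: "\<forall>s\<in>states V E. \<forall>s'\<in>states V E. s \<noteq> s' \<longrightarrow> 0 \<le> q s s'"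
    and single: "\<forall>s\<in>states V E. \<forall>s'\<in>states V E.
                   \<not> single_update V E s s' \<longrightarrow> q s s' = 0"
    and reversible: "\<forall>s\<in>states V E. \<forall>s'\<in>states V E.
                   IP V E p s * q s s' = IP V E p s' * q s' s"
    and "(\<eta>, \<sigma>) \<in> states V E" and "compatible E \<eta> \<sigma>"
    and "x \<in> V"
    and "q (\<eta>, \<sigma>) (\<eta>, flip \<sigma> x) \<noteq> 0"
  shows "\<forall>e\<in>E. x \<in> e \<longrightarrow> \<eta> e = 0"
proof (intro ballI impI, rule ccontr)
  fix e assume e: "e \<in> E" and xe: "x \<in> e" and ne: "\<eta> e \<noteq> 0"
  have etav: "\<forall>e\<in>E. \<eta> e \<in> {0,1}" using assms(8) unfolding states_def edge_configs_def by auto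
  have sv: "\<sigma> \<in> V \<rightarrow>\<^sub>E {-1,1}" using assms(8) unfolding states_def spin_configs_def by auto
  have e1: "\<eta> e = 1" using etav e ne by auto
  have d1: "delta \<sigma> e = 1"
  proof -
    have "\<eta> e \<le> delta \<sigma> e" using assms(9) e unfolding compatible_def by blast
    moreover have "delta \<sigma> e \<le> 1" unfolding delta_def by simp
    ultimately show ?thesis using e1 by linarith
  qed
  have "card e = 2" using assms(1) e unfolding graph_def by auto
  then obtain y where y: "y \<in> e" "y \<noteq> x" using xe
    by (metis card_2_iff insertCI)
  have "\<sigma> y = \<sigma> x" using d1 y xe unfolding delta_def by (metis one_neq_zero)
  moreover have "\<sigma> x \<noteq> 0"
  proof -
    have "\<sigma> x \<in> {-1,1}" using sv assms(10) by (meson PiE_mem)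
    thus ?thesis by auto
  qed
  ultimately have "flip \<sigma> x y \<noteq> flip \<sigma> x x" using y unfolding flip_def by simp
  hence "\<not> (\<forall>a\<in>e. \<forall>b\<in>e. flip \<sigma> x a = flip \<sigma> x b)" using y xe by blast
  hence "delta (flip \<sigma> x) e = 0" unfolding delta_def by simp
  hence w0: "weight E p (\<eta>, flip \<sigma> x) = 0" unfolding weight_def
    using e e1 finite_E[OF assms(1)]
    by (intro prod_zero) (auto intro!: bexI[of _ e])
  have s2: "(\<eta>, flip \<sigma> x) \<in> states V E" using assms(8) sv assms(10)
    unfolding states_def spin_configs_def flip_def by (auto simp: PiE_iff extensional_def)
  have wpos: "0 < weight E p (\<eta>, \<sigma>)" using weight_pos assms(3,4,9) etav by blast
  have "0 < partition_fn V E p" unfolding partition_fn_def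
  proof -
    have "weight E p (\<eta>, \<sigma>) \<le> (\<Sum>s\<in>states V E. weight E p s)"
      using finite_states[OF assms(1)] assms(8) weight_nonneg[OF assms(3,4)]
      by (intro member_le_sum) auto
    then show "0 < (\<Sum>s\<in>states V E. weight E p s)" using wpos by linarith
  qed
  hence ip: "0 < IP V E p (\<eta>, \<sigma>)" unfolding IP_def using wpos by simp
  have "IP V E p (\<eta>, flip \<sigma> x) = 0" unfolding IP_def w0 by simp
  hence "IP V E p (\<eta>, \<sigma>) * q (\<eta>, \<sigma>) (\<eta>, flip \<sigma> x) = 0"
  proof -
    have "IP V E p (\<eta>, \<sigma>) * q (\<eta>, \<sigma>) (\<eta>, flip \<sigma> x)
        = IP V E p (\<eta>, flip \<sigma> x) * q (\<eta>, flip \<sigma> x) (\<eta>, \<sigma>)"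
      using reversible assms(8) s2 by blast
    thus ?thesis using \<open>IP V E p (\<eta>, flip \<sigma> x) = 0\<close> by simp
  qed
  thus False using ip assms(11) by simp
qed

end
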